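(* Let $\beta>0$ and let $V\in\mathbb R^{d\times d}$ be symmetric and negative definite. Let $(x_1(t),x_2(t))\in\mathbb S^{d-1}\times\mathbb S^{d-1}$ solve the two-particle system \[ \dot x_i=P^\perp_{x_i}\Big(\frac1{Z_i}\sum_{j=1}^2 e^{\beta\langle x_i,Vx_j\rangle}Vx_j\Big),\qquad Z_i=\sum_{k=1}^2 e^{\beta\langle x_i,Vx_k\rangle},\quad i=1,2. \] Then $\rho(t):=\langle x_1(t),x_2(t)\rangle$ satisfies $\dot\rho(t)<0$ whenever $\rho(t)\in(-1,1)$; in particular $\rho$ is strictly decreasing on any time interval on which $\rho(t)\in(-1,1)$.
   Context: $P^\perp_xy=y-\langle x,y\rangle x$ denotes the orthogonal projection onto $T_x\mathbb S^{d-1}$. *)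

theory Defs
  imports "HOL-Analysis.Analysis"
begin

definition tproj :: "real^'n \<Rightarrow> real^'n \<Rightarrow> real^'n" where
  "tproj x y = y - (x \<bullet> y) *\<^sub>R x"

definition two_particle_field ::
  "real \<Rightarrow> real^'n^'n \<Rightarrow> (nat \<Rightarrow> real^'n) \<Rightarrow> nat \<Rightarrow> real^'n" where
  "two_particle_field \<beta> V xs i =
     (let Z = (\<Sum>k\<in>{1,2::nat}. exp (\<beta> * (xs i \<bullet> (V *v xs k))))
      in tproj (xs i)
           ((1 / Z) *\<^sub>R (\<Sum>j\<in>{1,2::nat}. exp (\<beta> * (xs i \<bullet> (V *v xs j))) *\<^sub>R (V *v xs j))))"

end

theory Submission
  imports Defs
begin

lemma two_le_exp: "2 * x \<le> exp (x::real)"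
proof (cases "x \<le> 0")
  case True then show ?thesis using exp_gt_zero[of x] by linarith
next
  case False
  have "exp x = exp (x/2) ^ 2" by (simp add: power2_eq_square flip: exp_add)
  moreover have "1 + x/2 \<le> exp (x/2)" by simp
  moreover have "(1 + x/2)^2 \<ge> 2 * x"
  proof -
    have "(1 + x/2)^2 - 2*x = (1 - x/2)^2" by (simp add: power2_eq_square algebra_simps)
    then show ?thesis using zero_le_power2[of "1 - x/2"] by linarith
  qed
  moreover have "(1 + x/2)^2 \<le> exp (x/2) ^ 2"
    using \<open>1 + x/2 \<le> exp (x/2)\<close> False by (intro power_mono) auto
  ultimately show ?thesis by linarith
qed

lemma g_bound:
  fixes x y :: real
  assumes "0 \<le> x" "x \<le> y"
  shows "(1/(1+exp x) - 1/(1+exp y)) * (x+y) \<le> y - x"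
proof -
  define d where "d = y - x"
  have ex: "exp x > 0" "exp y > 0" by auto
  have E: "2 * x \<le> exp x" by (rule two_le_exp)
  have pe: "1 + exp x > 0" using ex by (simp add: add_pos_pos)
  have B1: "1/(1+exp x) - 1/(1+exp y) \<le> 1/(1+exp x)" using ex by simp
  have ey: "exp y - exp x \<le> (y - x) * exp y"
  proof -
    have "exp x = exp y * exp (x - y)" by (simp flip: exp_add)
    moreover have "1 + (x - y) \<le> exp (x - y)" by (rule exp_ge_add_one_self)
    ultimately have "exp x \<ge> exp y * (1 + (x - y))" using ex by (simp add: mult_left_mono)
    then show ?thesis by (simp add: algebra_simps)
  qed
  have B2: "1/(1+exp x) - 1/(1+exp y) \<le> (y-x)/(1+exp x)"
  proof -
    have "1/(1+exp x) - 1/(1+exp y) = (exp y - exp x)/((1+exp x)*(1+exp y))"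
    proof -
      have "1 + exp x \<noteq> 0" "1 + exp y \<noteq> 0" using ex by linarith+
      then show ?thesis by (simp add: field_simps)
    qed
    also have "\<dots> \<le> ((y - x) * exp y)/((1+exp x)*(1+exp y))"
      using ey ex by (intro divide_right_mono) auto
    also have "\<dots> = (y-x)/(1+exp x) * (exp y/(1+exp y))" by simp
    also have "\<dots> \<le> (y-x)/(1+exp x)"
      using ex assms by (intro mult_left_le) (auto simp: divide_le_eq add_pos_pos)
    finally show ?thesis .
  qed
  have nn: "0 \<le> x + y" using assms by simp
  show ?thesis
  proof (cases "y - x \<ge> 1")
    case True
    have "(1/(1+exp x) - 1/(1+exp y)) * (x+y) \<le> 1/(1+exp x) * (x+y)"
      using B1 nn by (rule mult_right_mono)
    also have "\<dots> = (2*x + (y-x))/(1+exp x)" by simp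
    also have "\<dots> \<le> y - x"
    proof -
      have "2*x + (y-x) \<le> (y-x)*(1+exp x)"
      proof -
        have "exp x \<le> (y-x) * exp x" using True ex by simp
        then show ?thesis using E by (simp add: algebra_simps)
      qed
      moreover have "1 + exp x > 0" using ex by (simp add: add_pos_pos)
      ultimately show ?thesis by (simp add: divide_le_eq)
    qed
    finally show ?thesis .
  next
    case False
    have "(1/(1+exp x) - 1/(1+exp y)) * (x+y) \<le> (y-x)/(1+exp x) * (x+y)"
      using B2 nn by (rule mult_right_mono)
    also have "\<dots> = (y-x) * ((x+y)/(1+exp x))" by simp
    also have "\<dots> \<le> (y-x) * 1"
    proof (rule mult_left_mono)
      show "(x+y)/(1+exp x) \<le> 1" using E False pe by (simp add: divide_le_eq)
    qed (use assms in simp)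
    finally show ?thesis by simp
  qed
qed

lemma abs_b:
  fixes a b c :: real
  assumes "a < 0" "c < 0" "b^2 < a*c"
  shows "2*\<bar>b\<bar> < -(a+c)"
proof -
  have "(a+c)^2 - 4*b^2 > 0"
  proof -
    have "(a+c)^2 - 4*a*c = (a-c)^2" by (simp add: power2_eq_square algebra_simps)
    then show ?thesis using assms(3) zero_le_power2[of "a-c"] by linarith
  qed
  then have "(2*\<bar>b\<bar>)^2 < (-(a+c))^2" by (simp add: power2_eq_square algebra_simps)
  moreover have "0 \<le> -(a+c)" using assms by simp
  ultimately show ?thesis by (rule power_less_imp_less_base)
qed

lemma g01: "0 < 1/(1+exp (u::real))" "1/(1+exp u) \<le> 1"
proof -
  have p: "1 \<le> 1 + exp u" using exp_gt_zero[of u] by linarith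
  have q: "0 < 1 + exp u" using exp_gt_zero[of u] by linarith
  then show "0 < 1/(1+exp u)" by simp
  show "1/(1+exp u) \<le> 1" using divide_le_eq_1_pos[OF q, of 1] p by blast
qed

lemma Tm1:
  fixes a b c \<beta> :: real
  assumes "a < 0" "c < 0" "b^2 < a*c" "c \<le> a" "\<beta> > 0"
  shows "a+c+2*b + (1/(1+exp(\<beta>*(b-a))) - 1/(1+exp(\<beta>*(b-c))))*(a-c) \<le> 0"
proof -
  define \<delta> where "\<delta> = 1/(1+exp(\<beta>*(b-a))) - 1/(1+exp(\<beta>*(b-c)))"
  have AB: "2*\<bar>b\<bar> < -(a+c)" using abs_b assms by blast
  have "exp(\<beta>*(b-c)) \<ge> exp(\<beta>*(b-a))" using assms by (simp add: mult_left_mono)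
  then have d0: "\<delta> \<ge> 0" unfolding \<delta>_def
    apply (simp only: diff_ge_0_iff_ge)
    apply (rule divide_left_mono)
    using \<open>exp(\<beta>*(b-c)) \<ge> exp(\<beta>*(b-a))\<close> by (auto intro!: mult_pos_pos add_pos_pos)
  show ?thesis
  proof (cases "b \<le> 0")
    case True
    have "\<delta> \<le> 1" unfolding \<delta>_def
      using g01[of "\<beta>*(b-a)"] g01[of "\<beta>*(b-c)"] by linarith
    then have "\<delta>*(a-c) \<le> a - c" using mult_left_le[of \<delta> "a-c"] assms by (simp add: mult.commute)
    then show ?thesis unfolding \<delta>_def[symmetric] using True assms by linarith
  next
    case False
    have x0: "0 \<le> \<beta>*(b-a)" using False assms by simp
    have xy: "\<beta>*(b-a) \<le> \<beta>*(b-c)" using assms by (simp add: mult_left_mono)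
    have "\<delta> * (\<beta>*(b-a) + \<beta>*(b-c)) \<le> \<beta>*(b-c) - \<beta>*(b-a)"
      unfolding \<delta>_def by (rule g_bound[OF x0 xy])
    then have "\<beta> * (\<delta> * (2*b-a-c)) \<le> \<beta> * (a-c)" by (simp add: algebra_simps)
    then have g: "\<delta> * (2*b-a-c) \<le> a-c" using assms by simp
    define S where "S = 2*b-a-c"
    have S0: "S > 0" using AB False unfolding S_def by simp
    have "\<delta>*(2*b-a-c)*(a-c) \<le> (a-c)*(a-c)" using mult_right_mono[OF g] assms by simp
    then have "\<delta>*(a-c)*S \<le> (a-c)*(a-c)" unfolding S_def by (simp add: mult_ac)
    also have "\<dots> \<le> -(a+c+2*b)*S" unfolding S_def using assms
      by (simp add: power2_eq_square algebra_simps)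
    finally have "\<delta>*(a-c) \<le> -(a+c+2*b)" using S0 by simp
    then show ?thesis unfolding \<delta>_def by simp
  qed
qed

lemma g_eq: "exp (\<beta>*(a::real)) / (exp (\<beta>*a) + exp (\<beta>*b)) = 1/(1+exp(\<beta>*(b-a)))"
proof -
  have p: "exp (\<beta>*a) > 0" "exp (\<beta>*a) + exp (\<beta>*b) > 0" by (auto simp: add_pos_pos)
  have "1/(1+exp(\<beta>*(b-a))) = 1/(1 + exp(\<beta>*b)/exp(\<beta>*a))" by (simp add: right_diff_distrib exp_diff)
  also have "\<dots> = exp(\<beta>*a)/(exp(\<beta>*a)+exp(\<beta>*b))" using p by (simp add: field_simps)
  finally show ?thesis by simp
qed

lemma g_eq2: "exp (\<beta>*(c::real)) / (exp (\<beta>*b) + exp (\<beta>*c)) = 1/(1+exp(\<beta>*(b-c)))"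
  using g_eq[of \<beta> c b] by (simp add: add.commute)

lemma main_real:
  fixes a b c r \<beta> :: real
  assumes a0: "a < 0" and c0: "c < 0" and bac: "b^2 < a*c" and r: "-1 < r" "r < 1" and bp: "\<beta> > 0"
  shows "(exp (\<beta>*a)*(b - a*r) + exp (\<beta>*b)*(c - b*r))/(exp (\<beta>*a) + exp (\<beta>*b))
       + (exp (\<beta>*b)*(a - b*r) + exp (\<beta>*c)*(b - c*r))/(exp (\<beta>*b) + exp (\<beta>*c)) < 0"
proof -
  define ea eb ec where "ea = exp (\<beta>*a)" "eb = exp (\<beta>*b)" "ec = exp (\<beta>*c)"
  have pos: "ea > 0" "eb > 0" "ec > 0" unfolding ea_eb_ec_def by auto
  define p1 p2 where "p1 = ea/(ea+eb)" "p2 = ec/(eb+ec)"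
  have q1: "eb/(ea+eb) = 1 - p1" using pos unfolding p1_p2_def by (simp add: field_simps)
  have q2: "eb/(eb+ec) = 1 - p2" using pos unfolding p1_p2_def by (simp add: field_simps)
  have T: "(ea*(b - a*r) + eb*(c - b*r))/(ea+eb) + (eb*(a - b*r) + ec*(b - c*r))/(eb+ec)
     = p1*(b-a*r) + (1-p1)*(c-b*r) + (1-p2)*(a-b*r) + p2*(b-c*r)"
  proof -
    have "(ea*(b - a*r) + eb*(c - b*r))/(ea+eb) + (eb*(a - b*r) + ec*(b - c*r))/(eb+ec)
      = ea/(ea+eb)*(b-a*r) + eb/(ea+eb)*(c-b*r) + eb/(eb+ec)*(a-b*r) + ec/(eb+ec)*(b-c*r)"
      by (simp add: add_divide_distrib)
    also have "\<dots> = p1*(b-a*r) + (1-p1)*(c-b*r) + (1-p2)*(a-b*r) + p2*(b-c*r)"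
      unfolding q1 q2 unfolding p1_p2_def by simp
    finally show ?thesis .
  qed
  have lin: "p1*(b-a*r) + (1-p1)*(c-b*r) + (1-p2)*(a-b*r) + p2*(b-c*r)
     = (1+r)/2 * ((a+c-2*b)*(1-p1-p2)) + (1-r)/2 * (a+c+2*b + (p1-p2)*(a-c))"
    by (simp add: field_simps)
  have AB: "2*\<bar>b\<bar> < -(a+c)" using abs_b a0 c0 bac by blast
  have T1: "(a+c-2*b)*(1-p1-p2) < 0"
  proof -
    have "\<beta>*(a+c) < \<beta>*(2*b)" using AB bp by (intro mult_strict_left_mono) auto
    then have "ea*ec < eb*eb" unfolding ea_eb_ec_def
      by (simp flip: exp_add add: algebra_simps)
    then have lt: "ea*(eb+ec) + ec*(ea+eb) < (ea+eb)*(eb+ec)" by (simp add: algebra_simps)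
    have "p1 + p2 = (ea*(eb+ec) + ec*(ea+eb)) / ((ea+eb)*(eb+ec))"
      unfolding p1_p2_def using pos by (simp add: add_frac_eq)
    also have "\<dots> < 1" using lt pos by (simp add: divide_less_eq_1_pos)
    finally have "p1 + p2 < 1" .
    then show ?thesis using AB by (simp add: mult_neg_pos)
  qed
  have Tm: "a+c+2*b + (p1-p2)*(a-c) \<le> 0"
  proof (cases "c \<le> a")
    case True
    from Tm1[OF a0 c0 bac True bp] show ?thesis
      unfolding p1_p2_def ea_eb_ec_def g_eq g_eq2 by simp
  next
    case False
    have cab: "c*a > b^2" using bac by (simp add: mult.commute)
    have h: "c+a+2*b + (1/(1+exp(\<beta>*(b-c))) - 1/(1+exp(\<beta>*(b-a))))*(c-a) \<le> 0"
      using Tm1[OF c0 a0 cab _ bp] False by simp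
    have e: "\<And>P Q::real. (P - Q)*(c-a) = (Q-P)*(a-c)" by (simp add: algebra_simps)
    have pd: "p1 = 1/(1+exp(\<beta>*(b-a)))" "p2 = 1/(1+exp(\<beta>*(b-c)))"
      unfolding p1_p2_def ea_eb_ec_def g_eq g_eq2 by simp_all
    show ?thesis using h e[of "1/(1+exp(\<beta>*(b-c)))" "1/(1+exp(\<beta>*(b-a)))"] unfolding pd by linarith
  qed
  have "(1+r)/2 * ((a+c-2*b)*(1-p1-p2)) < 0" using T1 r by (simp add: mult_pos_neg)
  moreover have "(1-r)/2 * (a+c+2*b + (p1-p2)*(a-c)) \<le> 0" using Tm r by (simp add: mult_nonneg_nonpos)
  ultimately show ?thesis using T lin unfolding ea_eb_ec_def by linarith
qed

lemma sym_inner: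
  fixes V :: "real^'n^'n"
  assumes "transpose V = V"
  shows "u \<bullet> (V *v w) = w \<bullet> (V *v u)"
proof -
  have "u \<bullet> (V *v w) = (u v* V) \<bullet> w" by (simp add: dot_lmul_matrix)
  also have "u v* V = V *v u" using vector_transpose_matrix[of u V] assms by simp
  finally show ?thesis by (simp add: inner_commute)
qed

lemma field_inner:
  fixes V :: "real^'n^'n" and xs :: "nat \<Rightarrow> real^'n"
  assumes sym: "transpose V = V" and n1: "norm (xs 1) = 1" and n2: "norm (xs 2) = 1"
  shows "two_particle_field \<beta> V xs 1 \<bullet> xs 2 + xs 1 \<bullet> two_particle_field \<beta> V xs 2
    = (exp (\<beta>*(xs 1 \<bullet> (V *v xs 1)))*((xs 1 \<bullet> (V *v xs 2)) - (xs 1 \<bullet> (V *v xs 1))*(xs 1 \<bullet> xs 2))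
        + exp (\<beta>*(xs 1 \<bullet> (V *v xs 2)))*((xs 2 \<bullet> (V *v xs 2)) - (xs 1 \<bullet> (V *v xs 2))*(xs 1 \<bullet> xs 2)))
       /(exp (\<beta>*(xs 1 \<bullet> (V *v xs 1))) + exp (\<beta>*(xs 1 \<bullet> (V *v xs 2))))
     + (exp (\<beta>*(xs 1 \<bullet> (V *v xs 2)))*((xs 1 \<bullet> (V *v xs 1)) - (xs 1 \<bullet> (V *v xs 2))*(xs 1 \<bullet> xs 2))
        + exp (\<beta>*(xs 2 \<bullet> (V *v xs 2)))*((xs 1 \<bullet> (V *v xs 2)) - (xs 2 \<bullet> (V *v xs 2))*(xs 1 \<bullet> xs 2)))
       /(exp (\<beta>*(xs 1 \<bullet> (V *v xs 2))) + exp (\<beta>*(xs 2 \<bullet> (V *v xs 2))))"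
proof -
  define x1 x2 where "x1 = xs 1" "x2 = xs 2"
  define a b c r where "a = x1 \<bullet> (V *v x1)" "b = x1 \<bullet> (V *v x2)" "c = x2 \<bullet> (V *v x2)" "r = x1 \<bullet> x2"
  have b': "x2 \<bullet> (V *v x1) = b" unfolding a_b_c_r_def using sym_inner[OF sym] by metis
  have s11: "x1 \<bullet> x1 = 1" using n1 unfolding x1_x2_def by (metis power2_norm_eq_inner power_one)
  have s22: "x2 \<bullet> x2 = 1" using n2 unfolding x1_x2_def by (metis power2_norm_eq_inner power_one)
  define ea eb ec where "ea = exp (\<beta>*a)" "eb = exp (\<beta>*b)" "ec = exp (\<beta>*c)"
  have S: "\<And>f::nat\<Rightarrow>real^'n. (\<Sum>k\<in>{1,2::nat}. f k) = f 1 + f 2" by simp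
  have S': "\<And>f::nat\<Rightarrow>real. (\<Sum>k\<in>{1,2::nat}. f k) = f 1 + f 2" by simp
  have F1: "two_particle_field \<beta> V xs 1 = tproj x1 ((1/(ea+eb)) *\<^sub>R (ea *\<^sub>R (V *v x1) + eb *\<^sub>R (V *v x2)))"
    unfolding two_particle_field_def Let_def S S' x1_x2_def[symmetric] by (simp add: a_b_c_r_def ea_eb_ec_def)
  have F2: "two_particle_field \<beta> V xs 2 = tproj x2 ((1/(eb+ec)) *\<^sub>R (eb *\<^sub>R (V *v x1) + ec *\<^sub>R (V *v x2)))"
    unfolding two_particle_field_def Let_def S S' x1_x2_def[symmetric] by (simp add: a_b_c_r_def ea_eb_ec_def b')
  have vx2: "(V *v x1) \<bullet> x2 = b" "(V *v x2) \<bullet> x2 = c" "(V *v x1) \<bullet> x1 = a" "(V *v x2) \<bullet> x1 = b"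
    using b' by (simp_all add: a_b_c_r_def inner_commute)
  have I1: "two_particle_field \<beta> V xs 1 \<bullet> x2 = (ea*(b - a*r) + eb*(c - b*r))/(ea+eb)"
  proof -
    define y where "y = (1/(ea+eb)) *\<^sub>R (ea *\<^sub>R (V *v x1) + eb *\<^sub>R (V *v x2))"
    have "y \<bullet> x2 = (1/(ea+eb)) * (ea*b + eb*c)" unfolding y_def
      by (simp only: inner_scaleR_left inner_add_left vx2)
    moreover have "x1 \<bullet> y = (1/(ea+eb)) * (ea*a + eb*b)" unfolding y_def
      by (simp only: inner_scaleR_right inner_add_right a_b_c_r_def)
    moreover have "tproj x1 y \<bullet> x2 = y \<bullet> x2 - (x1 \<bullet> y) * r"
      unfolding tproj_def a_b_c_r_def by (simp add: inner_diff_left)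
    ultimately have "tproj x1 y \<bullet> x2 = (1/(ea+eb)) * (ea*b + eb*c) - (1/(ea+eb)) * (ea*a + eb*b) * r" by simp
    also have "\<dots> = ((ea*b + eb*c) - (ea*a + eb*b) * r)/(ea+eb)" by (simp add: diff_divide_distrib)
    also have "(ea*b + eb*c) - (ea*a + eb*b) * r = ea*(b - a*r) + eb*(c - b*r)" by (simp add: algebra_simps)
    finally show ?thesis unfolding F1 y_def .
  qed
  have I2: "x1 \<bullet> two_particle_field \<beta> V xs 2 = (eb*(a - b*r) + ec*(b - c*r))/(eb+ec)"
  proof -
    define y where "y = (1/(eb+ec)) *\<^sub>R (eb *\<^sub>R (V *v x1) + ec *\<^sub>R (V *v x2))"
    have "x1 \<bullet> y = (1/(eb+ec)) * (eb*a + ec*b)" unfolding y_def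
      by (simp only: inner_scaleR_right inner_add_right a_b_c_r_def)
    moreover have "x2 \<bullet> y = (1/(eb+ec)) * (eb*b + ec*c)" unfolding y_def
      by (simp only: inner_scaleR_right inner_add_right a_b_c_r_def b')
    moreover have "x1 \<bullet> tproj x2 y = x1 \<bullet> y - (x2 \<bullet> y) * r"
      unfolding tproj_def a_b_c_r_def by (simp add: inner_diff_right inner_commute)
    ultimately have "x1 \<bullet> tproj x2 y = (1/(eb+ec)) * (eb*a + ec*b) - (1/(eb+ec)) * (eb*b + ec*c) * r" by simp
    also have "\<dots> = ((eb*a + ec*b) - (eb*b + ec*c) * r)/(eb+ec)" by (simp add: diff_divide_distrib)
    also have "(eb*a + ec*b) - (eb*b + ec*c) * r = eb*(a - b*r) + ec*(b - c*r)" by (simp add: algebra_simps)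
    finally show ?thesis unfolding F2 y_def .
  qed
  show ?thesis using I1 I2 unfolding x1_x2_def a_b_c_r_def ea_eb_ec_def by simp
qed

lemma negdef_gram:
  fixes V :: "real^'n^'n" and x1 x2 :: "real^'n"
  assumes sym: "transpose V = V" and nd: "\<forall>v. v \<noteq> 0 \<longrightarrow> v \<bullet> (V *v v) < 0"
    and n1: "norm x1 = 1" and n2: "norm x2 = 1" and r: "x1 \<bullet> x2 \<in> {-1<..<1}"
  shows "x1 \<bullet> (V *v x1) < 0" "x2 \<bullet> (V *v x2) < 0"
    "(x1 \<bullet> (V *v x2))^2 < (x1 \<bullet> (V *v x1)) * (x2 \<bullet> (V *v x2))"
proof -
  define a b c where "a = x1 \<bullet> (V *v x1)" "b = x1 \<bullet> (V *v x2)" "c = x2 \<bullet> (V *v x2)"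
  have b': "x2 \<bullet> (V *v x1) = b" unfolding a_b_c_def using sym_inner[OF sym] by metis
  have s11: "x1 \<bullet> x1 = 1" using n1 by (metis power2_norm_eq_inner power_one)
  have s22: "x2 \<bullet> x2 = 1" using n2 by (metis power2_norm_eq_inner power_one)
  have "x1 \<noteq> 0" "x2 \<noteq> 0" using n1 n2 by auto
  then show a0: "x1 \<bullet> (V *v x1) < 0" and "x2 \<bullet> (V *v x2) < 0" using nd by blast+
  define v where "v = b *\<^sub>R x1 - a *\<^sub>R x2"
  have "v \<noteq> 0"
  proof
    assume "v = 0"
    then have e: "b *\<^sub>R x1 = a *\<^sub>R x2" unfolding v_def by simp
    have an: "a \<noteq> 0" using a0 a_b_c_def by simp
    have "x2 = (1/a) *\<^sub>R (a *\<^sub>R x2)" using an by simp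
    also have "\<dots> = (b/a) *\<^sub>R x1" unfolding e[symmetric] by simp
    finally have x2e: "x2 = (b/a) *\<^sub>R x1" .
    have "x1 \<bullet> x2 = b/a" using s11 by (simp add: x2e)
    moreover have "(b/a)^2 = x2 \<bullet> x2" using s11 by (simp add: x2e power2_eq_square)
    then have "(b/a)^2 = 1" using s22 by simp
    ultimately have "(x1 \<bullet> x2)^2 = 1" by simp
    then show False using r by (simp add: power2_eq_1_iff)
  qed
  then have "v \<bullet> (V *v v) < 0" using nd by blast
  moreover have "v \<bullet> (V *v v) = a * (a*c - b^2)"
    unfolding v_def by (simp add: algebra_simps inner_diff_left inner_diff_right a_b_c_def[symmetric] b' power2_eq_square)
  ultimately have "a * (a*c - b^2) < 0" by simp
  then have "a*c - b^2 > 0" using a0 a_b_c_def by (simp add: mult_less_0_iff)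
  then show "(x1 \<bullet> (V *v x2))^2 < (x1 \<bullet> (V *v x1)) * (x2 \<bullet> (V *v x2))" unfolding a_b_c_def by simp
qed

lemma inner_deriv:
  fixes f g :: "real \<Rightarrow> real^'n"
  assumes "(f has_vector_derivative f') (at t within S)" "(g has_vector_derivative g') (at t within S)"
  shows "((\<lambda>s. f s \<bullet> g s) has_real_derivative (f' \<bullet> g t + f t \<bullet> g')) (at t within S)"
proof -
  have "((\<lambda>s. f s \<bullet> g s) has_derivative (\<lambda>h. f t \<bullet> (h *\<^sub>R g') + (h *\<^sub>R f') \<bullet> g t)) (at t within S)"
    using assms unfolding has_vector_derivative_def by (intro has_derivative_inner)
  then show ?thesis unfolding has_real_derivative_iff_has_vector_derivative has_vector_derivative_def
    by (simp add: algebra_simps)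
qed

theorem lemma6p3:
  fixes \<beta> :: real and V :: "real^'n^'n" and x :: "nat \<Rightarrow> real \<Rightarrow> real^'n"
    and I :: "real set"
  assumes beta_pos: "\<beta> > 0"
    and V_sym: "transpose V = V"
    and V_negdef: "\<forall>v. v \<noteq> 0 \<longrightarrow> v \<bullet> (V *v v) < 0"
    and I_interval: "is_interval I"
    and on_sphere: "\<forall>i\<in>{1,2}. \<forall>t\<in>I. norm (x i t) = 1"
    and ode: "\<forall>i\<in>{1,2}. \<forall>t\<in>I.
               (x i has_vector_derivative two_particle_field \<beta> V (\<lambda>j. x j t) i) (at t within I)"
  shows "(\<forall>t\<in>I. x 1 t \<bullet> x 2 t \<in> {-1<..<1} \<longrightarrow>
            (\<exists>D<0. ((\<lambda>s. x 1 s \<bullet> x 2 s) has_real_derivative D) (at t within I)))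
       \<and> (\<forall>J. J \<subseteq> I \<and> is_interval J \<and> (\<forall>t\<in>J. x 1 t \<bullet> x 2 t \<in> {-1<..<1}) \<longrightarrow>
            (\<forall>s\<in>J. \<forall>t\<in>J. s < t \<longrightarrow> x 1 t \<bullet> x 2 t < x 1 s \<bullet> x 2 s))"
proof -
  let ?\<rho> = "\<lambda>s. x 1 s \<bullet> x 2 s"
  let ?D = "\<lambda>t. two_particle_field \<beta> V (\<lambda>j. x j t) 1 \<bullet> x 2 t + x 1 t \<bullet> two_particle_field \<beta> V (\<lambda>j. x j t) 2"
  have deriv: "(?\<rho> has_real_derivative ?D t) (at t within I)" if t: "t \<in> I" for t
  proof -
    have d1: "(x 1 has_vector_derivative two_particle_field \<beta> V (\<lambda>j. x j t) 1) (at t within I)"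
      using ode t by blast
    have d2: "(x 2 has_vector_derivative two_particle_field \<beta> V (\<lambda>j. x j t) 2) (at t within I)"
      using ode t by blast
    show ?thesis using inner_deriv[OF d1 d2] .
  qed
  have neg: "?D t < 0" if t: "t \<in> I" and r: "x 1 t \<bullet> x 2 t \<in> {-1<..<1}" for t
  proof -
    have n1: "norm (x 1 t) = 1" and n2: "norm (x 2 t) = 1" using on_sphere t by auto
    note G = negdef_gram[OF V_sym V_negdef n1 n2 r]
    have eq: "?D t = (exp (\<beta>*(x 1 t \<bullet> (V *v x 1 t)))*((x 1 t \<bullet> (V *v x 2 t)) - (x 1 t \<bullet> (V *v x 1 t))*(x 1 t \<bullet> x 2 t))
        + exp (\<beta>*(x 1 t \<bullet> (V *v x 2 t)))*((x 2 t \<bullet> (V *v x 2 t)) - (x 1 t \<bullet> (V *v x 2 t))*(x 1 t \<bullet> x 2 t)))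
       /(exp (\<beta>*(x 1 t \<bullet> (V *v x 1 t))) + exp (\<beta>*(x 1 t \<bullet> (V *v x 2 t))))
     + (exp (\<beta>*(x 1 t \<bullet> (V *v x 2 t)))*((x 1 t \<bullet> (V *v x 1 t)) - (x 1 t \<bullet> (V *v x 2 t))*(x 1 t \<bullet> x 2 t))
        + exp (\<beta>*(x 2 t \<bullet> (V *v x 2 t)))*((x 1 t \<bullet> (V *v x 2 t)) - (x 2 t \<bullet> (V *v x 2 t))*(x 1 t \<bullet> x 2 t)))
       /(exp (\<beta>*(x 1 t \<bullet> (V *v x 2 t))) + exp (\<beta>*(x 2 t \<bullet> (V *v x 2 t))))"
      by (rule field_inner[of V "\<lambda>j. x j t" \<beta>, OF V_sym n1 n2])
    have r1: "-1 < x 1 t \<bullet> x 2 t" "x 1 t \<bullet> x 2 t < 1" using r by auto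
    show ?thesis unfolding eq by (rule main_real[OF G(1) G(2) G(3) r1 beta_pos])
  qed
  have P1: "\<forall>t\<in>I. x 1 t \<bullet> x 2 t \<in> {-1<..<1} \<longrightarrow>
            (\<exists>D<0. ((\<lambda>s. x 1 s \<bullet> x 2 s) has_real_derivative D) (at t within I))"
  proof (intro ballI impI)
    fix t assume "t \<in> I" "x 1 t \<bullet> x 2 t \<in> {-1<..<1}"
    then show "\<exists>D<0. ((\<lambda>s. x 1 s \<bullet> x 2 s) has_real_derivative D) (at t within I)"
      using deriv[of t] neg[of t] by blast
  qed
  have P2: "\<forall>J. J \<subseteq> I \<and> is_interval J \<and> (\<forall>t\<in>J. x 1 t \<bullet> x 2 t \<in> {-1<..<1}) \<longrightarrow>
            (\<forall>s\<in>J. \<forall>t\<in>J. s < t \<longrightarrow> x 1 t \<bullet> x 2 t < x 1 s \<bullet> x 2 s)"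
  proof (intro allI impI ballI)
    fix J s t
    assume H: "J \<subseteq> I \<and> is_interval J \<and> (\<forall>t\<in>J. x 1 t \<bullet> x 2 t \<in> {-1<..<1})"
      and s: "s \<in> J" and t: "t \<in> J" and st: "s < t"
    have JI: "J \<subseteq> I" and iJ: "is_interval J" and rJ: "\<forall>t\<in>J. x 1 t \<bullet> x 2 t \<in> {-1<..<1}"
      using H by blast+
    have sub: "{s..t} \<subseteq> J"
    proof
      fix y assume "y \<in> {s..t}"
      then have "s \<le> y" "y \<le> t" by auto
      then show "y \<in> J" using iJ s t unfolding is_interval_1 by blast
    qed
    have sI: "{s..t} \<subseteq> I" using sub JI by (rule order_trans)
    have "?\<rho> t < ?\<rho> s"
    proof (rule DERIV_neg_imp_decreasing_open[OF st])
      fix y assume y: "s < y" "y < t"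
      have yJ: "y \<in> J" using sub y by auto
      have yI: "y \<in> I" using JI yJ by blast
      have "(?\<rho> has_real_derivative ?D y) (at y within {s..t})"
        by (rule DERIV_subset[OF deriv[OF yI] sI])
      then have "(?\<rho> has_real_derivative ?D y) (at y)" using at_within_Icc_at[OF y] by simp
      moreover have "?D y < 0" by (rule neg[OF yI rJ[rule_format, OF yJ]])
      ultimately show "\<exists>D. (?\<rho> has_real_derivative D) (at y) \<and> D < 0" by blast
    next
      show "continuous_on {s..t} ?\<rho>"
        unfolding continuous_on_eq_continuous_within
      proof
        fix y assume y: "y \<in> {s..t}"
        then have yI: "y \<in> I" using sI by blast
        have "(?\<rho> has_real_derivative ?D y) (at y within {s..t})"
          by (rule DERIV_subset[OF deriv[OF yI] sI])
        then show "continuous (at y within {s..t}) ?\<rho>" by (rule DERIV_continuous)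
      qed
    qed
    then show "x 1 t \<bullet> x 2 t < x 1 s \<bullet> x 2 s" by simp
  qed
  show ?thesis using P1 P2 by blast
qed

end
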